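(* Let $\mathfrak X$ be a metric measure space and $1\le p_1<p_2<\infty$. If ${\rm BMO}^{p_2}(\mathfrak X)\subsetneq{\rm BMO}^{p_1}(\mathfrak X)$, then for every $\alpha\in(1,\infty)$ also ${\rm BMO}^{\alpha p_2}(\mathfrak X)\subsetneq{\rm BMO}^{\alpha p_1}(\mathfrak X)$.
   Context: A metric measure space is $(X,\rho,\mu)$ with $X$ nonempty, $\rho$ a metric, $\mu$ a nonnegative Borel measure. For locally integrable $f$ and an open ball $B$ with $\mu(B)\in(0,\infty)$, $f_B=\mu(B)^{-1}\int_Bf\,d\mu$. For $p\in[1,\infty)$, ${\rm BMO}^p(\mathfrak X)$ consists of locally integrable $f$ with $\|f\|_{*,p}=\sup_B\big(\mu(B)^{-1}\int_B|f-f_B|^pd\mu\big)^{1/p}<\infty$, supremum over open balls with $\mu(B)\in(0,\infty)$. By Hölder's inequality ${\rm BMO}^{q}(\mathfrak X)\subset{\rm BMO}^{p}(\mathfrak X)$ whenever $p<q$. *)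

theory Defs
  imports "HOL-Analysis.Analysis"
begin

text \<open>Metric measure space: the metric space is the type 'a (metric dist),
  the measure M is a Borel measure on it (sets M = sets borel).\<close>

definition admissible_balls :: "'a::metric_space measure \<Rightarrow> 'a set set" where
  "admissible_balls M = {ball x r | x r. 0 < emeasure M (ball x r) \<and> emeasure M (ball x r) < \<infinity>}"

definition loc_integrable :: "'a::metric_space measure \<Rightarrow> ('a \<Rightarrow> real) \<Rightarrow> bool" where
  "loc_integrable M f \<longleftrightarrow> f \<in> borel_measurable M \<and>
     (\<forall>x r. emeasure M (ball x r) < \<infinity> \<longrightarrow> set_integrable M (ball x r) f)"

definition ball_avg :: "'a::metric_space measure \<Rightarrow> ('a \<Rightarrow> real) \<Rightarrow> 'a set \<Rightarrow> real" where
  "ball_avg M f B = (set_lebesgue_integral M B f) / measure M B"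

definition bmo_pow :: "real \<Rightarrow> 'a::metric_space measure \<Rightarrow> ('a \<Rightarrow> real) \<Rightarrow> ennreal" where
  "bmo_pow p M f = (SUP B \<in> admissible_balls M.
      (\<integral>\<^sup>+ y. indicator B y * ennreal (\<bar>f y - ball_avg M f B\<bar> powr p) \<partial>M) / emeasure M B)"

text \<open>BMO^p(X): locally integrable f with finite BMO^p seminorm
  (finiteness of the p-th power is equivalent to finiteness of the seminorm).\<close>
definition BMO :: "'a::metric_space measure \<Rightarrow> real \<Rightarrow> ('a \<Rightarrow> real) set" where
  "BMO M p = {f. loc_integrable M f \<and> bmo_pow p M f < \<infinity>}"

end

theory Submission
  imports Defs
begin



lemma powr_subadd:
  fixes x y t :: real
  assumes "0 \<le> x" "0 \<le> y" "0 < t" "t \<le> 1"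
  shows "(x+y) powr t \<le> x powr t + y powr t"
proof (cases "x = 0 \<or> y = 0")
  case True then show ?thesis using assms by auto
next
  case False
  then have xp: "0 < x" and yp: "0 < y" using assms by auto
  define s where "s = x + y"
  have sp: "0 < s" using xp yp s_def by simp
  have a: "x / s \<le> (x/s) powr t"
    using powr_mono'[of t 1 "x/s"] assms xp sp s_def by (simp add: divide_le_eq_1)
  have b: "y / s \<le> (y/s) powr t"
    using powr_mono'[of t 1 "y/s"] assms yp sp s_def by (simp add: divide_le_eq_1)
  have "s powr t = (x/s + y/s) * s powr t" using sp s_def by (simp add: add_divide_distrib[symmetric])
  also have "\<dots> \<le> ((x/s) powr t + (y/s) powr t) * s powr t"
    using a b by (intro mult_right_mono) auto
  also have "\<dots> = x powr t + y powr t"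
    using sp xp yp by (simp add: powr_divide distrib_right)
  finally show ?thesis using s_def by simp
qed

lemma holder_abs:
  fixes a b t :: real
  assumes "0 < t" "t \<le> 1"
  shows "\<bar>\<bar>a\<bar> powr t - \<bar>b\<bar> powr t\<bar> \<le> \<bar>a - b\<bar> powr t"
proof -
  have *: "\<bar>x\<bar> powr t - \<bar>y\<bar> powr t \<le> \<bar>x - y\<bar> powr t" for x y :: real
  proof -
    have "\<bar>x\<bar> powr t \<le> (\<bar>y\<bar> + \<bar>x - y\<bar>) powr t"
      using assms by (intro powr_mono2) auto
    also have "\<dots> \<le> \<bar>y\<bar> powr t + \<bar>x - y\<bar> powr t"
      using assms by (intro powr_subadd) auto
    finally show ?thesis by simp
  qed
  show ?thesis using *[of a b] *[of b a] by (simp add: abs_minus_commute abs_le_iff)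
qed

lemma abs_powr_le_one_plus:
  fixes u t p :: real
  assumes "0 \<le> t" "t \<le> p"
  shows "\<bar>u\<bar> powr t \<le> 1 + \<bar>u\<bar> powr p"
proof (cases "\<bar>u\<bar> \<le> 1")
  case True
  then have "\<bar>u\<bar> powr t \<le> 1" using assms powr_le1 by simp
  then show ?thesis by (smt (verit) powr_ge_zero)
next
  case False
  then have "\<bar>u\<bar> powr t \<le> \<bar>u\<bar> powr p" using assms by (intro powr_mono) auto
  then show ?thesis by simp
qed

lemma sum_powr_le:
  fixes a b q :: real
  assumes "0 \<le> a" "0 \<le> b" "0 < q"
  shows "(a + b) powr q \<le> 2 powr q * (a powr q + b powr q)"
proof -
  have "(a+b) powr q \<le> (2 * max a b) powr q" using assms by (intro powr_mono2) auto
  also have "\<dots> = 2 powr q * (max a b) powr q" using assms by (simp add: powr_mult)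
  also have "\<dots> \<le> 2 powr q * (a powr q + b powr q)"
    by (intro mult_left_mono) (auto simp: max_def)
  finally show ?thesis .
qed

lemma ennreal_le_plus:
  fixes x a y b :: real
  assumes "x \<le> a * y + b" "0 \<le> a" "0 \<le> y" "0 \<le> b"
  shows "ennreal x \<le> ennreal a * ennreal y + ennreal b"
proof -
  have "ennreal x \<le> ennreal (a * y + b)" using assms(1) by (rule ennreal_leI)
  also have "\<dots> = ennreal a * ennreal y + ennreal b"
    using assms by (simp add: ennreal_plus ennreal_mult)
  finally show ?thesis .
qed





definition Iq :: "'a::metric_space measure \<Rightarrow> real \<Rightarrow> ('a \<Rightarrow> real) \<Rightarrow> 'a set \<Rightarrow> ennreal" where
  "Iq M q v B = (\<integral>\<^sup>+ y. indicator B y * ennreal (\<bar>v y - ball_avg M v B\<bar> powr q) \<partial>M)"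

context
  fixes M :: "'a::metric_space measure"
  assumes sM: "sets M = sets borel"
begin

lemma adm:
  assumes "B \<in> admissible_balls M"
  shows "B \<in> sets M" "emeasure M B = ennreal (measure M B)" "0 < measure M B"
    "emeasure M B < \<infinity>" "emeasure M B \<noteq> 0"
proof -
  obtain x r where B: "B = ball x r" "0 < emeasure M (ball x r)" "emeasure M (ball x r) < \<infinity>"
    using assms unfolding admissible_balls_def by auto
  show "B \<in> sets M" using B sM by simp
  show e: "emeasure M B = ennreal (measure M B)" using B by (simp add: emeasure_eq_ennreal_measure)
  show "emeasure M B < \<infinity>" using B by simp
  show "emeasure M B \<noteq> 0" using B by simp
  then show "0 < measure M B" using e by (simp add: measure_nonneg order_less_le)
qed

lemma li_int: "loc_integrable M v \<Longrightarrow> B \<in> admissible_balls M \<Longrightarrow> set_integrable M B v"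
  unfolding loc_integrable_def admissible_balls_def by auto

lemma li_meas: "loc_integrable M v \<Longrightarrow> v \<in> borel_measurable M"
  unfolding loc_integrable_def by auto

lemma set_integrable_const':
  assumes "B \<in> admissible_balls M"
  shows "set_integrable M B (\<lambda>_. c::real)"
  using adm[OF assms] unfolding set_integrable_def by (intro integrable_scaleR_left) auto

lemma avg_add_const:
  assumes "B \<in> admissible_balls M" "set_integrable M B v"
  shows "ball_avg M (\<lambda>x. v x + c) B = ball_avg M v B + c"
proof -
  have "(LINT x:B|M. v x + c) = (LINT x:B|M. v x) + measure M B * c"
    using set_integral_add(2)[OF assms(2) set_integrable_const'[OF assms(1)]]
      set_integral_const[of B M c] adm[OF assms(1)] by simp
  then show ?thesis using adm[OF assms(1)] unfolding ball_avg_def by (simp add: field_simps)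
qed

lemma avg_diff:
  assumes "set_integrable M B v" "set_integrable M B w"
  shows "ball_avg M (\<lambda>x. v x - w x) B = ball_avg M v B - ball_avg M w B"
  using set_integral_diff(2)[OF assms] unfolding ball_avg_def by (simp add: diff_divide_distrib)

lemma avg_cmult: "ball_avg M (\<lambda>x. a * v x) B = a * ball_avg M v B"
  unfolding ball_avg_def by simp

lemma avg_abs_le:
  assumes B: "B \<in> admissible_balls M" and w: "set_integrable M B w" and C: "0 \<le> C"
    and bnd: "(\<integral>\<^sup>+ y. indicator B y * ennreal \<bar>w y\<bar> \<partial>M) \<le> ennreal C * emeasure M B"
  shows "\<bar>ball_avg M w B\<bar> \<le> C"
proof -
  have i: "integrable M (\<lambda>x. indicator B x *\<^sub>R w x)" using w unfolding set_integrable_def .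
  have "ennreal \<bar>LINT x:B|M. w x\<bar> \<le> (\<integral>\<^sup>+ x. ennreal (norm (indicator B x *\<^sub>R w x)) \<partial>M)"
    using integral_norm_bound_ennreal[OF i] unfolding set_lebesgue_integral_def by simp
  also have "\<dots> = (\<integral>\<^sup>+ y. indicator B y * ennreal \<bar>w y\<bar> \<partial>M)"
    by (intro nn_integral_cong) (auto split: split_indicator)
  also have "\<dots> \<le> ennreal (C * measure M B)"
    using bnd adm[OF B] C by (simp add: ennreal_mult)
  finally have "\<bar>LINT x:B|M. w x\<bar> \<le> C * measure M B"
    using C adm[OF B] by (subst (asm) ennreal_le_iff) auto
  then show ?thesis using adm[OF B] unfolding ball_avg_def by (simp add: divide_le_eq abs_divide)
qed

lemma bmo_ge: "B \<in> admissible_balls M \<Longrightarrow> Iq M q v B / emeasure M B \<le> bmo_pow q M v"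
  unfolding bmo_pow_def Iq_def by (rule SUP_upper)

lemma bmo_le_const:
  assumes "\<And>B. B \<in> admissible_balls M \<Longrightarrow> Iq M q v B \<le> ennreal C * emeasure M B"
  shows "bmo_pow q M v \<le> ennreal C"
  unfolding bmo_pow_def Iq_def[symmetric]
proof (rule SUP_least)
  fix B assume B: "B \<in> admissible_balls M"
  show "Iq M q v B / emeasure M B \<le> ennreal C"
    using adm[OF B] assms[OF B] by (intro divide_le_posI_ennreal) (auto simp: mult.commute)
qed

lemma Iq_le_of_bmo:
  assumes B: "B \<in> admissible_balls M" and b: "bmo_pow q M v \<le> ennreal C"
  shows "Iq M q v B \<le> ennreal C * emeasure M B"
proof -
  have "Iq M q v B / emeasure M B \<le> ennreal C" using bmo_ge[OF B] b by (rule order_trans)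
  then have "Iq M q v B / emeasure M B * emeasure M B \<le> ennreal C * emeasure M B"
    by (rule mult_right_mono) simp
  also have "Iq M q v B / emeasure M B * emeasure M B = Iq M q v B"
    using adm[OF B] by (simp add: ennreal_divide_times ennreal_times_divide)
  finally show ?thesis .
qed

lemma nn_int_ind_mono:
  assumes B: "B \<in> sets M" and F: "F \<in> borel_measurable M" and G: "G \<in> borel_measurable M"
    and le: "\<And>y. y \<in> B \<Longrightarrow> F y \<le> a * G y + b"
  shows "(\<integral>\<^sup>+ y. indicator B y * F y \<partial>M) \<le> a * (\<integral>\<^sup>+ y. indicator B y * G y \<partial>M) + b * emeasure M B"
proof -
  have "(\<integral>\<^sup>+ y. indicator B y * F y \<partial>M) \<le> (\<integral>\<^sup>+ y. a * (indicator B y * G y) + b * indicator B y \<partial>M)"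
    using le by (intro nn_integral_mono) (auto split: split_indicator)
  also have "\<dots> = a * (\<integral>\<^sup>+ y. indicator B y * G y \<partial>M) + b * emeasure M B"
    using B G by (simp add: nn_integral_add nn_integral_cmult nn_integral_cmult_indicator)
  finally show ?thesis .
qed

end




context
  fixes M :: "'a::metric_space measure"
  assumes sM: "sets M = sets borel"
begin

lemma BMO_mono:
  assumes "0 < q1" "q1 < q2" "v \<in> BMO M q2"
  shows "v \<in> BMO M q1"
proof -
  have li: "loc_integrable M v" and fin: "bmo_pow q2 M v < \<infinity>" using assms(3) unfolding BMO_def by auto
  define C where "C = enn2real (bmo_pow q2 M v)"
  have bC: "bmo_pow q2 M v \<le> ennreal C" using fin unfolding C_def by (simp add: less_top)
  have vm[measurable]: "v \<in> borel_measurable M" using li_meas[OF sM li] .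
  have "bmo_pow q1 M v \<le> ennreal (1 * C + 1)"
  proof (rule bmo_le_const[OF sM])
    fix B assume B: "B \<in> admissible_balls M"
    have "Iq M q1 v B \<le> 1 * Iq M q2 v B + 1 * emeasure M B"
      unfolding Iq_def
    proof (rule nn_int_ind_mono[OF sM adm(1)[OF sM B]])
      fix y assume "y \<in> B"
      have "\<bar>v y - ball_avg M v B\<bar> powr q1 \<le> 1 + \<bar>v y - ball_avg M v B\<bar> powr q2"
        using abs_powr_le_one_plus[of q1 q2 "v y - ball_avg M v B"] assms by simp
      then show "ennreal (\<bar>v y - ball_avg M v B\<bar> powr q1) \<le> 1 * ennreal (\<bar>v y - ball_avg M v B\<bar> powr q2) + 1"
        using ennreal_le_plus[of _ 1 _ 1] by simp
    qed measurable
    also have "\<dots> \<le> ennreal C * emeasure M B + 1 * emeasure M B"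
      using Iq_le_of_bmo[OF sM B bC] by (intro add_mono) auto
    also have "\<dots> = ennreal (1 * C + 1) * emeasure M B"
      using C_def by (simp add: distrib_right ennreal_plus)
    finally show "Iq M q1 v B \<le> ennreal (1 * C + 1) * emeasure M B" .
  qed
  then show ?thesis using li unfolding BMO_def by (simp add: le_less_trans)
qed

end




context
  fixes M :: "'a::metric_space measure" and f :: "'a \<Rightarrow> real" and p1 \<alpha> :: real
  assumes sM: "sets M = sets borel" and fB: "f \<in> BMO M p1" and p1: "1 \<le> p1" and al: "1 < \<alpha>"
begin

abbreviation "N1 \<equiv> enn2real (bmo_pow p1 M f)"

lemma f_li: "loc_integrable M f" using fB unfolding BMO_def by auto
lemma f_meas[measurable]: "f \<in> borel_measurable M" using li_meas[OF sM f_li] .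
lemma N1_ge: "0 \<le> N1" by simp
lemma bmoN1: "bmo_pow p1 M f \<le> ennreal N1" using fB unfolding BMO_def by (simp add: less_top)
lemma Iq_f: "B \<in> admissible_balls M \<Longrightarrow> Iq M p1 f B \<le> ennreal N1 * emeasure M B"
  using Iq_le_of_bmo[OF sM _ bmoN1] .

lemma th: "0 < 1/\<alpha>" "1/\<alpha> \<le> 1" "1/\<alpha> \<le> p1"
  using al p1 mult_mono[of 1 p1 1 \<alpha>] by (auto simp: divide_le_eq)

lemma ubound:
  assumes B: "B \<in> admissible_balls M" and w: "set_integrable M B w" and K: "0 \<le> K"
    and wm[measurable]: "w \<in> borel_measurable M"
    and wb: "\<And>y. y \<in> B \<Longrightarrow> \<bar>w y\<bar> \<le> K * \<bar>f y - ball_avg M f B\<bar> powr (1/\<alpha>)"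
  shows "\<bar>ball_avg M w B\<bar> \<le> K * (1 + N1)"
proof (rule avg_abs_le[OF sM B w])
  show "0 \<le> K * (1 + N1)" using K by simp
  have "(\<integral>\<^sup>+ y. indicator B y * ennreal \<bar>w y\<bar> \<partial>M)
     \<le> ennreal K * (\<integral>\<^sup>+ y. indicator B y * ennreal (\<bar>f y - ball_avg M f B\<bar> powr p1) \<partial>M) + ennreal K * emeasure M B"
  proof (rule nn_int_ind_mono[OF sM adm(1)[OF sM B]])
    fix y assume y: "y \<in> B"
    have "\<bar>w y\<bar> \<le> K * \<bar>f y - ball_avg M f B\<bar> powr (1/\<alpha>)" using wb[OF y] .
    also have "\<dots> \<le> K * (1 + \<bar>f y - ball_avg M f B\<bar> powr p1)"
      using abs_powr_le_one_plus[of "1/\<alpha>" p1] th K by (intro mult_left_mono) auto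
    finally show "ennreal \<bar>w y\<bar> \<le> ennreal K * ennreal (\<bar>f y - ball_avg M f B\<bar> powr p1) + ennreal K"
      using K by (intro ennreal_le_plus) (auto simp: algebra_simps)
  qed measurable
  also have "\<dots> \<le> ennreal K * (ennreal N1 * emeasure M B) + ennreal K * emeasure M B"
    using Iq_f[OF B] unfolding Iq_def by (intro add_mono mult_left_mono) auto
  also have "\<dots> = ennreal (K * (1 + N1)) * emeasure M B"
    using K by (simp add: ennreal_mult ennreal_plus distrib_left distrib_right mult.assoc add.commute)
  finally show "(\<integral>\<^sup>+ y. indicator B y * ennreal \<bar>w y\<bar> \<partial>M) \<le> ennreal (K * (1 + N1)) * emeasure M B" .
qed

end




context
  fixes M :: "'a::metric_space measure" and f :: "'a \<Rightarrow> real" and p1 \<alpha> :: real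
  assumes sM: "sets M = sets borel" and fB: "f \<in> BMO M p1" and p1: "1 \<le> p1" and al: "1 < \<alpha>"
begin

lemma compG:
  assumes \<Phi>m[measurable]: "\<Phi> \<in> borel_measurable borel" and K: "0 \<le> K"
    and hol: "\<And>s t. \<bar>\<Phi> s - \<Phi> t\<bar> \<le> K * \<bar>s - t\<bar> powr (1/\<alpha>)" and \<Phi>0: "\<Phi> 0 = 0"
  shows "(\<lambda>x. \<Phi> (f x)) \<in> BMO M (\<alpha> * p1)"
proof -
  note th = th[OF sM fB p1 al]
  note fm[measurable] = f_meas[OF sM fB p1 al]
  have pb: "\<bar>\<Phi> t\<bar> \<le> K * (1 + \<bar>t\<bar>)" for t
  proof -
    have "\<bar>\<Phi> t\<bar> \<le> K * \<bar>t\<bar> powr (1/\<alpha>)" using hol[of t 0] \<Phi>0 by simp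
    also have "\<dots> \<le> K * (1 + \<bar>t\<bar> powr 1)"
      using abs_powr_le_one_plus[of "1/\<alpha>" 1 t] th K by (intro mult_left_mono) auto
    finally show ?thesis by simp
  qed
  have li: "loc_integrable M (\<lambda>x. \<Phi> (f x))"
    unfolding loc_integrable_def
  proof (intro conjI allI impI)
    show "(\<lambda>x. \<Phi> (f x)) \<in> borel_measurable M" by measurable
    fix x r assume fin: "emeasure M (ball x r) < \<infinity>"
    have bs: "ball x r \<in> sets M" using sM by simp
    have fi: "set_integrable M (ball x r) f" using f_li[OF sM fB p1 al] fin unfolding loc_integrable_def by auto
    have ci: "set_integrable M (ball x r) (\<lambda>_. 1::real)"
      using bs fin unfolding set_integrable_def by (intro integrable_scaleR_left) auto
    have gi: "set_integrable M (ball x r) (\<lambda>y. K * (1 + \<bar>f y\<bar>))"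
      using set_integral_add(1)[OF ci set_integrable_abs[OF fi]] by (intro set_integrable_mult_right)
    show "set_integrable M (ball x r) (\<lambda>y. \<Phi> (f y))"
    proof (rule set_integrable_bound[OF gi])
      show "set_borel_measurable M (ball x r) (\<lambda>y. \<Phi> (f y))"
        unfolding set_borel_measurable_def using bs by measurable
      show "AE y in M. y \<in> ball x r \<longrightarrow> norm (\<Phi> (f y)) \<le> norm (K * (1 + \<bar>f y\<bar>))"
        using pb K by (auto intro!: AE_I2)
    qed
  qed
  define A where "A = 2 powr (\<alpha>*p1) * K powr (\<alpha>*p1)"
  define D where "D = 2 powr (\<alpha>*p1) * (K * (1 + N1 M f p1)) powr (\<alpha>*p1)"
  have A0: "0 \<le> A" and D0: "0 \<le> D" unfolding A_def D_def by auto
  have "bmo_pow (\<alpha>*p1) M (\<lambda>x. \<Phi> (f x)) \<le> ennreal (A * N1 M f p1 + D)"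
  proof (rule bmo_le_const[OF sM])
    fix B assume B: "B \<in> admissible_balls M"
    define c where "c = ball_avg M f B"
    define w where "w = (\<lambda>y. \<Phi> (f y) - \<Phi> c)"
    have wm[measurable]: "w \<in> borel_measurable M" unfolding w_def by measurable
    have \<Phi>i: "set_integrable M B (\<lambda>y. \<Phi> (f y))" using li_int[OF sM li B] .
    have wi: "set_integrable M B w"
      unfolding w_def by (rule set_integral_diff(1)[OF \<Phi>i set_integrable_const'[OF sM B]])
    have wb: "\<bar>w y\<bar> \<le> K * \<bar>f y - c\<bar> powr (1/\<alpha>)" for y unfolding w_def using hol by simp
    have aw: "\<bar>ball_avg M w B\<bar> \<le> K * (1 + N1 M f p1)"
      using ubound[OF sM fB p1 al B wi K wm] wb c_def by simp
    have eqf: "(\<lambda>y. \<Phi> (f y)) = (\<lambda>y. w y + \<Phi> c)" unfolding w_def by simp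
    have avgeq: "ball_avg M (\<lambda>y. \<Phi> (f y)) B = ball_avg M w B + \<Phi> c"
      unfolding eqf by (rule avg_add_const[OF sM B wi])
    have pt: "\<bar>\<Phi> (f y) - ball_avg M (\<lambda>y. \<Phi> (f y)) B\<bar> powr (\<alpha>*p1)
        \<le> A * \<bar>f y - c\<bar> powr p1 + D" for y
    proof -
      have e1: "\<bar>\<Phi> (f y) - ball_avg M (\<lambda>y. \<Phi> (f y)) B\<bar> = \<bar>w y - ball_avg M w B\<bar>"
        unfolding avgeq w_def by simp
      have "\<bar>w y - ball_avg M w B\<bar> \<le> K * \<bar>f y - c\<bar> powr (1/\<alpha>) + K * (1 + N1 M f p1)"
        using wb[of y] aw by linarith
      then have "\<bar>w y - ball_avg M w B\<bar> powr (\<alpha>*p1)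
          \<le> (K * \<bar>f y - c\<bar> powr (1/\<alpha>) + K * (1 + N1 M f p1)) powr (\<alpha>*p1)"
        using al p1 by (intro powr_mono2) auto
      also have "\<dots> \<le> 2 powr (\<alpha>*p1) * ((K * \<bar>f y - c\<bar> powr (1/\<alpha>)) powr (\<alpha>*p1) + (K * (1 + N1 M f p1)) powr (\<alpha>*p1))"
        using K al p1 by (intro sum_powr_le) auto
      also have "(K * \<bar>f y - c\<bar> powr (1/\<alpha>)) powr (\<alpha>*p1) = K powr (\<alpha>*p1) * \<bar>f y - c\<bar> powr p1"
        using K al by (simp add: powr_mult powr_powr)
      finally show ?thesis unfolding e1 A_def D_def by (simp add: algebra_simps)
    qed
    have "Iq M (\<alpha>*p1) (\<lambda>x. \<Phi> (f x)) B \<le> ennreal A * Iq M p1 f B + ennreal D * emeasure M B"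
      unfolding Iq_def
    proof (rule nn_int_ind_mono[OF sM adm(1)[OF sM B]])
      fix y assume "y \<in> B"
      show "ennreal (\<bar>\<Phi> (f y) - ball_avg M (\<lambda>y. \<Phi> (f y)) B\<bar> powr (\<alpha>*p1))
          \<le> ennreal A * ennreal (\<bar>f y - ball_avg M f B\<bar> powr p1) + ennreal D"
        using pt[of y] A0 D0 c_def by (intro ennreal_le_plus) auto
    qed measurable
    also have "\<dots> \<le> ennreal A * (ennreal (N1 M f p1) * emeasure M B) + ennreal D * emeasure M B"
      using Iq_f[OF sM fB p1 al B] by (intro add_mono mult_left_mono) auto
    also have "\<dots> = ennreal (A * N1 M f p1 + D) * emeasure M B"
      using A0 D0 by (simp add: ennreal_mult ennreal_plus distrib_right mult.assoc)
    finally show "Iq M (\<alpha>*p1) (\<lambda>x. \<Phi> (f x)) B \<le> ennreal (A * N1 M f p1 + D) * emeasure M B" .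
  qed
  then show ?thesis using li unfolding BMO_def by (simp add: le_less_trans)
qed

end




definition psiF :: "real \<Rightarrow> real \<Rightarrow> real \<Rightarrow> real" where
  "psiF \<theta> c t = \<bar>t - c\<bar> powr \<theta> - \<bar>c\<bar> powr \<theta>"

definition PhiF :: "real \<Rightarrow> (nat \<Rightarrow> real) \<Rightarrow> (nat \<Rightarrow> bool) \<Rightarrow> real \<Rightarrow> real" where
  "PhiF \<theta> cs \<epsilon> t = (\<Sum>i. if \<epsilon> i then (1/2)^i * psiF \<theta> (cs i) t else 0)"

lemma geo_bound_summable:
  fixes a :: "nat \<Rightarrow> real"
  assumes "\<And>i. \<bar>a i\<bar> \<le> (1/2)^i * C"
  shows "summable a" "summable (\<lambda>i. \<bar>a i\<bar>)" "\<bar>suminf a\<bar> \<le> 2 * C"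
proof -
  have g: "summable (\<lambda>i. (1/2::real)^i * C)" by (intro summable_mult2 summable_geometric) simp
  show sa: "summable (\<lambda>i. \<bar>a i\<bar>)"
    using assms by (intro summable_comparison_test[OF _ g]) auto
  then show "summable a" using summable_norm_cancel[of a] by simp
  have "\<bar>suminf a\<bar> \<le> (\<Sum>i. \<bar>a i\<bar>)" using summable_norm[of a] sa by simp
  also have "\<dots> \<le> (\<Sum>i. (1/2::real)^i * C)" using assms by (intro suminf_le sa g) auto
  also have "\<dots> = 2 * C" using suminf_mult2[OF summable_geometric[of "1/2::real"], of C] suminf_geometric[of "1/2::real"] by simp
  finally show "\<bar>suminf a\<bar> \<le> 2 * C" .
qed

context
  fixes \<theta> :: real assumes th0: "0 < \<theta>" and th1: "\<theta> \<le> 1"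
begin

lemma psi_holder: "\<bar>psiF \<theta> c s - psiF \<theta> c t\<bar> \<le> \<bar>s - t\<bar> powr \<theta>"
  using holder_abs[OF th0 th1, of "s - c" "t - c"] unfolding psiF_def by simp

lemma psi_bound: "\<bar>psiF \<theta> c t\<bar> \<le> \<bar>t\<bar> powr \<theta>"
  using holder_abs[OF th0 th1, of "t - c" "- c"] unfolding psiF_def by simp

lemma term_bound: "\<bar>(if \<epsilon> i then (1/2)^i * psiF \<theta> (cs i) t else 0)\<bar> \<le> (1/2)^i * \<bar>t\<bar> powr \<theta>"
  using psi_bound[of "cs i" t] by (auto simp: abs_mult intro: mult_left_mono)

lemma Phi_summable: "summable (\<lambda>i. if \<epsilon> i then (1/2)^i * psiF \<theta> (cs i) t else 0)"
  using geo_bound_summable(1)[OF term_bound] .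

lemma Phi_holder: "\<bar>PhiF \<theta> cs \<epsilon> s - PhiF \<theta> cs \<epsilon> t\<bar> \<le> 2 * \<bar>s - t\<bar> powr \<theta>"
proof -
  have "PhiF \<theta> cs \<epsilon> s - PhiF \<theta> cs \<epsilon> t
     = (\<Sum>i. (if \<epsilon> i then (1/2)^i * psiF \<theta> (cs i) s else 0) - (if \<epsilon> i then (1/2)^i * psiF \<theta> (cs i) t else 0))"
    unfolding PhiF_def by (intro suminf_diff Phi_summable)
  also have "\<bar>\<dots>\<bar> \<le> 2 * \<bar>s - t\<bar> powr \<theta>"
  proof (rule geo_bound_summable(3))
    fix i
    show "\<bar>(if \<epsilon> i then (1/2)^i * psiF \<theta> (cs i) s else 0) - (if \<epsilon> i then (1/2)^i * psiF \<theta> (cs i) t else 0)\<bar>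
        \<le> (1/2)^i * \<bar>s - t\<bar> powr \<theta>"
      using psi_holder[of "cs i" s t] by (auto simp: abs_mult right_diff_distrib[symmetric] intro: mult_left_mono)
  qed
  finally show ?thesis .
qed

lemma Phi0: "PhiF \<theta> cs \<epsilon> 0 = 0"
proof -
  have "(\<lambda>i. if \<epsilon> i then (1/2)^i * psiF \<theta> (cs i) 0 else 0) = (\<lambda>i. 0::real)"
    by (auto simp: psiF_def)
  then show ?thesis unfolding PhiF_def by simp
qed

lemma Phi_tail:
  assumes agree: "\<And>i. i < k \<Longrightarrow> \<epsilon>' i = \<epsilon> i"
  shows "\<bar>PhiF \<theta> cs \<epsilon>' t - PhiF \<theta> cs \<epsilon> t\<bar> \<le> 2 * (1/2)^k * \<bar>t\<bar> powr \<theta>"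
proof -
  define d where "d i = (if \<epsilon>' i then (1/2)^i * psiF \<theta> (cs i) t else 0) - (if \<epsilon> i then (1/2)^i * psiF \<theta> (cs i) t else 0)" for i
  have db: "\<bar>d i\<bar> \<le> (1/2)^i * \<bar>t\<bar> powr \<theta>" for i
    unfolding d_def using psi_bound[of "cs i" t] by (auto simp: abs_mult intro: mult_left_mono)
  have d0: "i < k \<Longrightarrow> d i = 0" for i unfolding d_def using agree by simp
  have eq: "PhiF \<theta> cs \<epsilon>' t - PhiF \<theta> cs \<epsilon> t = suminf d"
    unfolding PhiF_def d_def by (intro suminf_diff Phi_summable)
  have sd: "summable d" using geo_bound_summable(1)[OF db] .
  have "suminf d = (\<Sum>n. d (n + k)) + sum d {..<k}" by (rule suminf_split_initial_segment[OF sd])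
  also have "sum d {..<k} = 0" using d0 by simp
  finally have e2: "suminf d = (\<Sum>n. d (n + k))" by simp
  have "\<bar>\<Sum>n. d (n + k)\<bar> \<le> 2 * ((1/2)^k * \<bar>t\<bar> powr \<theta>)"
  proof (rule geo_bound_summable(3))
    fix n show "\<bar>d (n + k)\<bar> \<le> (1/2)^n * ((1/2)^k * \<bar>t\<bar> powr \<theta>)"
      using db[of "n+k"] by (simp add: power_add mult_ac)
  qed
  then show ?thesis using eq e2 by (simp add: mult_ac)
qed

lemma Phi_flip:
  "PhiF \<theta> cs (\<epsilon>(j:=True)) t - PhiF \<theta> cs (\<epsilon>(j:=False)) t = (1/2)^j * psiF \<theta> (cs j) t"
proof -
  have "PhiF \<theta> cs (\<epsilon>(j:=True)) t - PhiF \<theta> cs (\<epsilon>(j:=False)) t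
     = (\<Sum>i. (if (\<epsilon>(j:=True)) i then (1/2)^i * psiF \<theta> (cs i) t else 0) - (if (\<epsilon>(j:=False)) i then (1/2)^i * psiF \<theta> (cs i) t else 0))"
    unfolding PhiF_def by (intro suminf_diff Phi_summable)
  also have "(\<lambda>i. (if (\<epsilon>(j:=True)) i then (1/2)^i * psiF \<theta> (cs i) t else 0) - (if (\<epsilon>(j:=False)) i then (1/2)^i * psiF \<theta> (cs i) t else 0))
      = (\<lambda>i. if i = j then (1/2)^j * psiF \<theta> (cs j) t else 0)" by auto
  also have "suminf \<dots> = (1/2)^j * psiF \<theta> (cs j) t" by (rule sums_unique[symmetric, OF sums_single])
  finally show ?thesis .
qed

lemma Phi_meas: "PhiF \<theta> cs \<epsilon> \<in> borel_measurable borel"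
  unfolding PhiF_def psiF_def by measurable

end




definition Acon :: "real \<Rightarrow> real \<Rightarrow> nat \<Rightarrow> real" where
  "Acon q N j = 2 powr q * ((2^j) powr q * 2 powr q * 2 * real j + (1+N) powr q)"

context
  fixes M :: "'a::metric_space measure" and f :: "'a \<Rightarrow> real" and p1 \<alpha> :: real
  assumes sM: "sets M = sets borel" and fB: "f \<in> BMO M p1" and p1: "1 \<le> p1" and al: "1 < \<alpha>"
begin

lemmas fm_W7[measurable] = f_meas[OF sM fB p1 al]
lemmas thh_W7 = th[OF sM fB p1 al]

lemma g_BMO: "(\<lambda>x. psiF (1/\<alpha>) c (f x)) \<in> BMO M (\<alpha> * p1)"
proof (rule compG[OF sM fB p1 al])
  note th = th[OF sM fB p1 al]
  show "psiF (1/\<alpha>) c \<in> borel_measurable borel" unfolding psiF_def by measurable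
  show "\<bar>psiF (1/\<alpha>) c s - psiF (1/\<alpha>) c t\<bar> \<le> 1 * \<bar>s - t\<bar> powr (1/\<alpha>)" for s t
    using psi_holder[OF th(1,2)] by simp
  show "psiF (1/\<alpha>) c 0 = 0" unfolding psiF_def by simp
qed simp

lemma hh_BMO: "(\<lambda>x. PhiF (1/\<alpha>) cs \<epsilon> (f x)) \<in> BMO M (\<alpha> * p1)"
proof (rule compG[OF sM fB p1 al])
  note th = th[OF sM fB p1 al]
  show "PhiF (1/\<alpha>) cs \<epsilon> \<in> borel_measurable borel" using Phi_meas[OF th(1,2)] .
  show "\<bar>PhiF (1/\<alpha>) cs \<epsilon> s - PhiF (1/\<alpha>) cs \<epsilon> t\<bar> \<le> 2 * \<bar>s - t\<bar> powr (1/\<alpha>)" for s t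
    using Phi_holder[OF th(1,2)] by simp
  show "PhiF (1/\<alpha>) cs \<epsilon> 0 = 0" using Phi0[OF th(1,2)] .
qed simp

lemma BMO_li: "v \<in> BMO M q \<Longrightarrow> loc_integrable M v" unfolding BMO_def by auto

lemma lower:
  assumes B: "B \<in> admissible_balls M" and q2: "0 < q2" and pq: "p2 = q2 / \<alpha>"
  shows "Iq M p2 f B \<le> ennreal (2 powr q2) * Iq M q2 (\<lambda>x. psiF (1/\<alpha>) (ball_avg M f B) (f x)) B
     + ennreal (2 powr q2 * (1 + N1 M f p1) powr q2) * emeasure M B"
proof -
  note th = th[OF sM fB p1 al]
  define c where "c = ball_avg M f B"
  define g where "g = (\<lambda>x. psiF (1/\<alpha>) c (f x))"
  define v where "v = (\<lambda>x. \<bar>f x - c\<bar> powr (1/\<alpha>))"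
  have gm[measurable]: "g \<in> borel_measurable M" unfolding g_def psiF_def by measurable
  have vm[measurable]: "v \<in> borel_measurable M" unfolding v_def by measurable
  have gi: "set_integrable M B g" unfolding g_def using li_int[OF sM BMO_li[OF g_BMO] B] .
  have veq: "v = (\<lambda>x. g x + \<bar>c\<bar> powr (1/\<alpha>))" unfolding v_def g_def psiF_def by auto
  have vi: "set_integrable M B v" unfolding veq
    by (rule set_integral_add(1)[OF gi set_integrable_const'[OF sM B]])
  have av: "\<bar>ball_avg M v B\<bar> \<le> 1 * (1 + N1 M f p1)"
    using ubound[OF sM fB p1 al B vi _ vm, of 1] unfolding v_def c_def by simp
  have avg_eq: "ball_avg M v B = ball_avg M g B + \<bar>c\<bar> powr (1/\<alpha>)"
    unfolding veq by (rule avg_add_const[OF sM B gi])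
  have pt: "\<bar>f y - c\<bar> powr p2 \<le> 2 powr q2 * \<bar>g y - ball_avg M g B\<bar> powr q2 + 2 powr q2 * (1 + N1 M f p1) powr q2" for y
  proof -
    have "\<bar>f y - c\<bar> powr p2 = v y powr q2" unfolding v_def using pq al by (simp add: powr_powr)
    also have "v y \<le> \<bar>g y - ball_avg M g B\<bar> + (1 + N1 M f p1)"
      using av avg_eq veq by (simp add: fun_eq_iff)
    then have "v y powr q2 \<le> (\<bar>g y - ball_avg M g B\<bar> + (1 + N1 M f p1)) powr q2"
      using q2 unfolding v_def by (intro powr_mono2) auto
    also have "\<dots> \<le> 2 powr q2 * (\<bar>g y - ball_avg M g B\<bar> powr q2 + (1 + N1 M f p1) powr q2)"
      using q2 by (intro sum_powr_le) auto
    finally show ?thesis by (simp add: algebra_simps)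
  qed
  show ?thesis unfolding Iq_def c_def[symmetric] g_def[symmetric]
  proof (rule nn_int_ind_mono[OF sM adm(1)[OF sM B]])
    fix y assume "y \<in> B"
    show "ennreal (\<bar>f y - c\<bar> powr p2) \<le> ennreal (2 powr q2) * ennreal (\<bar>g y - ball_avg M g B\<bar> powr q2)
       + ennreal (2 powr q2 * (1 + N1 M f p1) powr q2)"
      using pt[of y] by (intro ennreal_le_plus) auto
  qed measurable
qed

end




context
  fixes M :: "'a::metric_space measure" and f :: "'a \<Rightarrow> real" and p1 p2 \<alpha> :: real
    and Bs :: "nat \<Rightarrow> 'a set"
  assumes sM: "sets M = sets borel" and fB: "f \<in> BMO M p1" and p1: "1 \<le> p1" and al: "1 < \<alpha>"
    and p12: "p1 < p2"
    and Badm: "\<And>j. Bs j \<in> admissible_balls M"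
    and Bbig: "\<And>j. ennreal (Acon (\<alpha>*p2) (N1 M f p1) j) * emeasure M (Bs j) < Iq M p2 f (Bs j)"
begin

lemmas fm_W8[measurable] = f_meas[OF sM fB p1 al]
lemmas thh_W8 = th[OF sM fB p1 al]

abbreviation "cs j \<equiv> ball_avg M f (Bs j)"
abbreviation "hh \<epsilon> \<equiv> (\<lambda>x. PhiF (1/\<alpha>) cs \<epsilon> (f x))"

lemma q2pos: "0 < \<alpha> * p2" using al p1 p12 by simp

lemma hh_meas[measurable]: "hh \<epsilon> \<in> borel_measurable M"
  using measurable_compose[OF fm_W8 Phi_meas[OF thh_W8(1,2)]] by (simp add: o_def)

lemma hh_int: "B \<in> admissible_balls M \<Longrightarrow> set_integrable M B (hh \<epsilon>)"
  using li_int[OF sM BMO_li[OF sM fB p1 al hh_BMO[OF sM fB p1 al]]] .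

lemma flip:
  fixes \<epsilon> j
  defines "h1 \<equiv> hh (\<epsilon>(j:=True))" and "h0 \<equiv> hh (\<epsilon>(j:=False))"
  shows "Iq M (\<alpha>*p2) (\<lambda>x. psiF (1/\<alpha>) (cs j) (f x)) (Bs j)
    \<le> ennreal ((2^j) powr (\<alpha>*p2) * 2 powr (\<alpha>*p2)) * (Iq M (\<alpha>*p2) h1 (Bs j) + Iq M (\<alpha>*p2) h0 (Bs j))"
proof -
  define B where "B = Bs j"
  define g where "g = (\<lambda>x. psiF (1/\<alpha>) (cs j) (f x))"
  define q where "q = \<alpha> * p2"
  define P where "P = (2^j) powr q * 2 powr q"
  have q: "0 < q" using q2pos q_def by simp
  have P0: "0 \<le> P" unfolding P_def by simp
  have B: "B \<in> admissible_balls M" using Badm B_def by simp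
  have gm[measurable]: "g \<in> borel_measurable M" unfolding g_def psiF_def by measurable
  have h1m[measurable]: "h1 \<in> borel_measurable M" and h0m[measurable]: "h0 \<in> borel_measurable M"
    unfolding h1_def h0_def by (rule hh_meas)+
  have i1: "set_integrable M B h1" and i0: "set_integrable M B h0"
    unfolding h1_def h0_def using hh_int[OF B] by auto
  have dif: "h1 x - h0 x = (1/2)^j * g x" for x
    unfolding h1_def h0_def g_def using Phi_flip[OF thh_W8(1,2)] by simp
  have "ball_avg M h1 B - ball_avg M h0 B = ball_avg M (\<lambda>x. h1 x - h0 x) B"
    using avg_diff[OF sM i1 i0] by simp
  also have "\<dots> = (1/2)^j * ball_avg M g B" unfolding dif by (rule avg_cmult[OF sM])
  finally have ad: "ball_avg M h1 B - ball_avg M h0 B = (1/2)^j * ball_avg M g B" .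
  have geq: "g y - ball_avg M g B = 2^j * ((h1 y - ball_avg M h1 B) - (h0 y - ball_avg M h0 B))" for y
  proof -
    have "(h1 y - ball_avg M h1 B) - (h0 y - ball_avg M h0 B) = (1/2)^j * (g y - ball_avg M g B)"
      using dif[of y] ad by (simp add: algebra_simps)
    then show ?thesis by (simp add: power_one_over)
  qed
  have pt: "\<bar>g y - ball_avg M g B\<bar> powr q \<le> P * \<bar>h1 y - ball_avg M h1 B\<bar> powr q + P * \<bar>h0 y - ball_avg M h0 B\<bar> powr q" for y
  proof -
    have "\<bar>g y - ball_avg M g B\<bar> \<le> 2^j * (\<bar>h1 y - ball_avg M h1 B\<bar> + \<bar>h0 y - ball_avg M h0 B\<bar>)"
      unfolding geq abs_mult by (simp add: mult_left_mono abs_triangle_ineq4)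
    then have "\<bar>g y - ball_avg M g B\<bar> powr q \<le> (2^j * (\<bar>h1 y - ball_avg M h1 B\<bar> + \<bar>h0 y - ball_avg M h0 B\<bar>)) powr q"
      using q by (intro powr_mono2) auto
    also have "\<dots> = (2^j) powr q * (\<bar>h1 y - ball_avg M h1 B\<bar> + \<bar>h0 y - ball_avg M h0 B\<bar>) powr q"
      by (simp add: powr_mult)
    also have "\<dots> \<le> (2^j) powr q * (2 powr q * (\<bar>h1 y - ball_avg M h1 B\<bar> powr q + \<bar>h0 y - ball_avg M h0 B\<bar> powr q))"
      using q by (intro mult_left_mono sum_powr_le) auto
    finally show ?thesis unfolding P_def by (simp add: algebra_simps)
  qed
  have "Iq M q g B \<le> (\<integral>\<^sup>+ y. ennreal P * (indicator B y * ennreal (\<bar>h1 y - ball_avg M h1 B\<bar> powr q))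
      + ennreal P * (indicator B y * ennreal (\<bar>h0 y - ball_avg M h0 B\<bar> powr q)) \<partial>M)"
    unfolding Iq_def
  proof (intro nn_integral_mono)
    fix y
    have "ennreal (\<bar>g y - ball_avg M g B\<bar> powr q) \<le> ennreal P * ennreal (\<bar>h1 y - ball_avg M h1 B\<bar> powr q) + ennreal (P * \<bar>h0 y - ball_avg M h0 B\<bar> powr q)"
      using pt[of y] P0 by (intro ennreal_le_plus) auto
    then show "indicator B y * ennreal (\<bar>g y - ball_avg M g B\<bar> powr q) \<le> ennreal P * (indicator B y * ennreal (\<bar>h1 y - ball_avg M h1 B\<bar> powr q))
      + ennreal P * (indicator B y * ennreal (\<bar>h0 y - ball_avg M h0 B\<bar> powr q))"
      using P0 by (auto split: split_indicator simp: ennreal_mult)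
  qed
  also have "\<dots> = ennreal P * (Iq M q h1 B + Iq M q h0 B)"
    unfolding Iq_def using adm(1)[OF sM B]
    by (simp add: nn_integral_add nn_integral_cmult distrib_left)
  finally show ?thesis unfolding B_def g_def q_def P_def .
qed

lemma dense:
  "\<exists>\<epsilon>' B. (\<forall>i<k. \<epsilon>' i = \<epsilon> i) \<and> B \<in> admissible_balls M \<and>
      ennreal (real n) * emeasure M B < Iq M (\<alpha>*p2) (hh \<epsilon>') B"
proof (rule ccontr)
  assume nd: "\<not> ?thesis"
  define j where "j = max k n"
  define B where "B = Bs j"
  define q where "q = \<alpha> * p2"
  define P where "P = (2^j) powr q * 2 powr q"
  define D where "D = 2 powr q * (1 + N1 M f p1) powr q"
  define m where "m = measure M B"
  have B: "B \<in> admissible_balls M" using Badm B_def by simp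
  have \<mu>: "emeasure M B = ennreal m" using adm(2)[OF sM B] m_def by simp
  have m0: "0 < m" using adm(3)[OF sM B] m_def by simp
  have q: "0 < q" using q2pos q_def by simp
  have P0: "0 \<le> P" unfolding P_def by simp
  have D0: "0 \<le> D" unfolding D_def by simp
  have a1: "\<forall>i<k. (\<epsilon>(j:=True)) i = \<epsilon> i" and a0: "\<forall>i<k. (\<epsilon>(j:=False)) i = \<epsilon> i"
    using j_def by auto
  have nd': "\<And>\<epsilon>'. \<forall>i<k. \<epsilon>' i = \<epsilon> i \<Longrightarrow> Iq M q (hh \<epsilon>') B \<le> ennreal (real n) * emeasure M B"
    using nd B unfolding q_def not_ex not_less de_Morgan_conj by blast
  have I1: "Iq M q (hh (\<epsilon>(j:=True))) B \<le> ennreal (real n) * emeasure M B"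
    by (rule nd'[OF a1])
  have I0: "Iq M q (hh (\<epsilon>(j:=False))) B \<le> ennreal (real n) * emeasure M B"
    by (rule nd'[OF a0])
  have L: "Iq M p2 f B \<le> ennreal (2 powr q) * Iq M q (\<lambda>x. psiF (1/\<alpha>) (ball_avg M f B) (f x)) B
     + ennreal D * emeasure M B"
    using lower[OF sM fB p1 al B q, of p2] al unfolding q_def D_def by simp
  have F: "Iq M q (\<lambda>x. psiF (1/\<alpha>) (ball_avg M f B) (f x)) B
      \<le> ennreal P * (Iq M q (hh (\<epsilon>(j:=True))) B + Iq M q (hh (\<epsilon>(j:=False))) B)"
    using flip[of j \<epsilon>] unfolding B_def q_def P_def by simp
  have F2: "ennreal P * (Iq M q (hh (\<epsilon>(j:=True))) B + Iq M q (hh (\<epsilon>(j:=False))) B) \<le> ennreal P * (ennreal (real n) * emeasure M B + ennreal (real n) * emeasure M B)"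
    using I1 I0 by (intro mult_left_mono add_mono) auto
  have "Iq M p2 f B \<le> ennreal (2 powr q) * (ennreal P * (ennreal (real n) * emeasure M B + ennreal (real n) * emeasure M B)) + ennreal D * emeasure M B"
    using L F F2 by (meson add_right_mono mult_left_mono order_trans zero_le)
  also have "\<dots> = ennreal (2 powr q * (P * (real n * m + real n * m)) + D * m)"
    proof -
      note a = P0 D0 m0
      have e1: "ennreal (real n) * ennreal m = ennreal (real n * m)" using a by (intro ennreal_mult[symmetric]) auto
      have e2: "ennreal (real n * m) + ennreal (real n * m) = ennreal (real n * m + real n * m)" using a by (intro ennreal_plus[symmetric]) auto
      have e3: "ennreal P * ennreal (real n * m + real n * m) = ennreal (P * (real n * m + real n * m))" using a by (intro ennreal_mult[symmetric]) auto
      have e4: "ennreal (2 powr q) * ennreal (P * (real n * m + real n * m)) = ennreal (2 powr q * (P * (real n * m + real n * m)))" using a by (intro ennreal_mult[symmetric]) auto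
      have e5: "ennreal D * ennreal m = ennreal (D * m)" using a by (intro ennreal_mult[symmetric]) auto
      have e6: "ennreal (2 powr q * (P * (real n * m + real n * m))) + ennreal (D * m) = ennreal (2 powr q * (P * (real n * m + real n * m)) + D * m)"
        using a by (intro ennreal_plus[symmetric]) auto
      show ?thesis unfolding \<mu> e1 e2 e3 e4 e5 e6 ..
    qed
  also have "\<dots> \<le> ennreal (Acon q (N1 M f p1) j * m)"
  proof (rule ennreal_leI)
    have nj: "real n \<le> real j" using j_def by simp
    have "2 powr q * (P * (real n * m + real n * m)) \<le> 2 powr q * (P * (real j * m + real j * m))"
      using nj m0 P0 by (intro mult_left_mono add_mono mult_right_mono) auto
    then show "2 powr q * (P * (real n * m + real n * m)) + D * m \<le> Acon q (N1 M f p1) j * m"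
      unfolding Acon_def P_def D_def by (simp add: algebra_simps)
  qed
  also have "\<dots> = ennreal (Acon q (N1 M f p1) j) * emeasure M B"
  proof -
    have A0: "0 \<le> Acon q (N1 M f p1) j" unfolding Acon_def
      by (intro mult_nonneg_nonneg add_nonneg_nonneg) auto
    show ?thesis unfolding \<mu> using m0 A0 by (intro ennreal_mult) auto
  qed
  finally show False using Bbig[of j] unfolding B_def q_def by simp
qed

end




context
  fixes M :: "'a::metric_space measure" and f :: "'a \<Rightarrow> real" and p1 p2 \<alpha> :: real
    and Bs :: "nat \<Rightarrow> 'a set"
  assumes sM: "sets M = sets borel" and fB: "f \<in> BMO M p1" and p1: "1 \<le> p1" and al: "1 < \<alpha>"
    and p12: "p1 < p2"
    and Badm: "\<And>j. Bs j \<in> admissible_balls M"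
    and Bbig: "\<And>j. ennreal (Acon (\<alpha>*p2) (N1 M f p1) j) * emeasure M (Bs j) < Iq M p2 f (Bs j)"
begin

lemmas fm_W10[measurable] = f_meas[OF sM fB p1 al]
lemmas thh_W10 = th[OF sM fB p1 al]
lemmas hhm_W10[measurable] = hh_meas[OF sM fB p1 al p12 Badm Bbig]
lemmas hhi_W10 = hh_int[OF sM fB p1 al p12 Badm Bbig]

lemma openness:
  assumes B: "B \<in> admissible_balls M"
    and gt: "ennreal n * emeasure M B < Iq M (\<alpha>*p2) (\<lambda>x. PhiF (1/\<alpha>) (\<lambda>j. ball_avg M f (Bs j)) \<epsilon> (f x)) B"
  shows "\<exists>k. \<forall>\<epsilon>'. (\<forall>i<k. \<epsilon>' i = \<epsilon> i) \<longrightarrow>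
     ennreal n * emeasure M B < Iq M (\<alpha>*p2) (\<lambda>x. PhiF (1/\<alpha>) (\<lambda>j. ball_avg M f (Bs j)) \<epsilon>' (f x)) B"
proof (rule ccontr)
  define cs where "cs = (\<lambda>j. ball_avg M f (Bs j))"
  define H where "H = (\<lambda>e x. PhiF (1/\<alpha>) cs e (f x))"
  define q where "q = \<alpha> * p2"
  have q: "0 < q" using al p1 p12 q_def by simp
  assume "\<not> ?thesis"
  then have "\<forall>k. \<exists>e. (\<forall>i<k. e i = \<epsilon> i) \<and> Iq M q (H e) B \<le> ennreal n * emeasure M B"
    unfolding H_def cs_def q_def by (auto simp: not_less)
  then obtain E where E: "\<And>k. \<forall>i<k. E k i = \<epsilon> i" "\<And>k. Iq M q (H (E k)) B \<le> ennreal n * emeasure M B"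
    by metis
  have Bm[measurable]: "B \<in> sets M" using adm(1)[OF sM B] .
  have Hm[measurable]: "H e \<in> borel_measurable M" for e unfolding H_def cs_def using hhm_W10 .
  have Hi: "set_integrable M B (H e)" for e unfolding H_def cs_def using hhi_W10[OF B] .
  have Hb: "\<bar>H e x\<bar> \<le> 2 * (1 + \<bar>f x\<bar>)" for e x
  proof -
    have "\<bar>H e x\<bar> \<le> 2 * \<bar>f x\<bar> powr (1/\<alpha>)"
      using Phi_holder[OF thh_W10(1,2), of cs e "f x" 0] Phi0[OF thh_W10(1,2)] unfolding H_def by simp
    also have "\<dots> \<le> 2 * (1 + \<bar>f x\<bar> powr 1)"
      using abs_powr_le_one_plus[of "1/\<alpha>" 1 "f x"] thh_W10 by (intro mult_left_mono) auto
    finally show ?thesis by simp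
  qed
  have pconv: "(\<lambda>k. H (E k) x) \<longlonglongrightarrow> H \<epsilon> x" for x
  proof -
    have "(\<lambda>k. H (E k) x - H \<epsilon> x) \<longlonglongrightarrow> 0"
    proof (rule Lim_null_comparison)
      show "\<forall>\<^sub>F k in sequentially. norm (H (E k) x - H \<epsilon> x) \<le> 2 * (1/2)^k * \<bar>f x\<bar> powr (1/\<alpha>)"
        using Phi_tail[OF thh_W10(1,2), of _ "E _" \<epsilon> cs "f x"] E(1) unfolding H_def by (auto intro!: always_eventually)
      show "(\<lambda>k. 2 * (1/2::real)^k * \<bar>f x\<bar> powr (1/\<alpha>)) \<longlonglongrightarrow> 0"
        by (intro tendsto_mult_left_zero tendsto_mult_right_zero LIMSEQ_power_zero) auto
    qed
    then show ?thesis by (rule LIM_zero_cancel)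
  qed
  have bi: "set_integrable M B (\<lambda>x. 2 * (1 + \<bar>f x\<bar>))"
    using set_integral_add(1)[OF set_integrable_const'[OF sM B, of 1] set_integrable_abs[OF li_int[OF sM f_li[OF sM fB p1 al] B]]]
    by (intro set_integrable_mult_right)
  have iconv: "(\<lambda>k. LINT x:B|M. H (E k) x) \<longlonglongrightarrow> (LINT x:B|M. H \<epsilon> x)"
    unfolding set_lebesgue_integral_def
  proof (rule integral_dominated_convergence[where w = "\<lambda>x. indicator B x *\<^sub>R (2 * (1 + \<bar>f x\<bar>))"])
    show "(\<lambda>x. indicat_real B x *\<^sub>R H \<epsilon> x) \<in> borel_measurable M"
      using Hi unfolding set_integrable_def by auto
    show "(\<lambda>x. indicat_real B x *\<^sub>R H (E k) x) \<in> borel_measurable M" for k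
      using Hi unfolding set_integrable_def by auto
    show "integrable M (\<lambda>x. indicator B x *\<^sub>R (2 * (1 + \<bar>f x\<bar>)))" using bi unfolding set_integrable_def .
    show "AE x in M. (\<lambda>k. indicat_real B x *\<^sub>R H (E k) x) \<longlonglongrightarrow> indicat_real B x *\<^sub>R H \<epsilon> x"
      using pconv by (auto intro!: AE_I2 tendsto_mult_left)
    show "AE x in M. norm (indicat_real B x *\<^sub>R H (E k) x) \<le> indicator B x *\<^sub>R (2 * (1 + \<bar>f x\<bar>))" for k
      using Hb by (auto intro!: AE_I2 split: split_indicator)
  qed
  have aconv: "(\<lambda>k. ball_avg M (H (E k)) B) \<longlonglongrightarrow> ball_avg M (H \<epsilon>) B"
    unfolding ball_avg_def by (intro tendsto_divide iconv tendsto_const) (use adm(3)[OF sM B] in simp)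
  have gconv: "(\<lambda>k. indicator B y * ennreal (\<bar>H (E k) y - ball_avg M (H (E k)) B\<bar> powr q))
      \<longlonglongrightarrow> indicator B y * ennreal (\<bar>H \<epsilon> y - ball_avg M (H \<epsilon>) B\<bar> powr q)" for y
  proof (cases "y \<in> B")
    case True
    have "(\<lambda>k. ennreal (\<bar>H (E k) y - ball_avg M (H (E k)) B\<bar> powr q))
      \<longlonglongrightarrow> ennreal (\<bar>H \<epsilon> y - ball_avg M (H \<epsilon>) B\<bar> powr q)"
      using q by (intro tendsto_intros pconv aconv) auto
    then show ?thesis using True by simp
  qed simp
  have "Iq M q (H \<epsilon>) B = (\<integral>\<^sup>+ y. liminf (\<lambda>k. indicator B y * ennreal (\<bar>H (E k) y - ball_avg M (H (E k)) B\<bar> powr q)) \<partial>M)"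
    unfolding Iq_def using lim_imp_Liminf[OF trivial_limit_sequentially gconv] by simp
  also have "\<dots> \<le> liminf (\<lambda>k. Iq M q (H (E k)) B)"
    unfolding Iq_def by (rule nn_integral_liminf) measurable
  also have "\<dots> \<le> ennreal n * emeasure M B"
    using E(2) by (intro Liminf_le) auto
  finally show False using gt unfolding H_def cs_def q_def by simp
qed

end




lemma ennreal_lt_div:
  fixes X \<mu> n :: ennreal
  assumes "n * \<mu> < X" "0 < \<mu>" "\<mu> < \<infinity>"
  shows "n < X / \<mu>"
proof (rule ccontr)
  assume "\<not> n < X / \<mu>"
  then have "X / \<mu> \<le> n" by simp
  then have "X / \<mu> * \<mu> \<le> n * \<mu>" by (rule mult_right_mono) simp
  also have "X / \<mu> * \<mu> = X" using assms by (simp add: ennreal_divide_times ennreal_times_divide)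
  finally show False using assms(1) by simp
qed

context
  fixes M :: "'a::metric_space measure" and f :: "'a \<Rightarrow> real" and p1 p2 \<alpha> :: real
    and Bs :: "nat \<Rightarrow> 'a set"
  assumes sM: "sets M = sets borel" and fB: "f \<in> BMO M p1" and p1: "1 \<le> p1" and al: "1 < \<alpha>"
    and p12: "p1 < p2"
    and Badm: "\<And>j. Bs j \<in> admissible_balls M"
    and Bbig: "\<And>j. ennreal (Acon (\<alpha>*p2) (N1 M f p1) j) * emeasure M (Bs j) < Iq M p2 f (Bs j)"
begin

abbreviation "HH \<epsilon> \<equiv> (\<lambda>x. PhiF (1/\<alpha>) (\<lambda>j. ball_avg M f (Bs j)) \<epsilon> (f x))"

lemma step:
  "\<exists>\<epsilon>' k'. k < k' \<and> (\<forall>i<k. \<epsilon>' i = \<epsilon> i) \<and>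
     (\<forall>\<epsilon>''. (\<forall>i<k'. \<epsilon>'' i = \<epsilon>' i) \<longrightarrow> ennreal (real n) < bmo_pow (\<alpha>*p2) M (HH \<epsilon>''))"
proof -
  obtain \<epsilon>' B where a: "\<forall>i<k. \<epsilon>' i = \<epsilon> i" and B: "B \<in> admissible_balls M"
    and gt: "ennreal (real n) * emeasure M B < Iq M (\<alpha>*p2) (HH \<epsilon>') B"
    using dense[OF sM fB p1 al p12 Badm Bbig, of k \<epsilon> n] by blast
  obtain k0 where k0: "\<forall>e. (\<forall>i<k0. e i = \<epsilon>' i) \<longrightarrow> ennreal (real n) * emeasure M B < Iq M (\<alpha>*p2) (HH e) B"
    using openness[OF sM fB p1 al p12 Badm Bbig B gt] by blast
  show ?thesis
  proof (intro exI conjI)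
    show "k < max k0 (Suc k)" by simp
    show "\<forall>i<k. \<epsilon>' i = \<epsilon> i" by (rule a)
  next
    show "\<forall>e. (\<forall>i<max k0 (Suc k). e i = \<epsilon>' i) \<longrightarrow> ennreal (real n) < bmo_pow (\<alpha>*p2) M (HH e)"
    proof (intro allI impI)
    fix e assume "\<forall>i<max k0 (Suc k). e i = \<epsilon>' i"
    then have "ennreal (real n) * emeasure M B < Iq M (\<alpha>*p2) (HH e) B" using k0 by auto
    then have "ennreal (real n) < Iq M (\<alpha>*p2) (HH e) B / emeasure M B"
      using adm(4,5)[OF sM B] by (intro ennreal_lt_div) (auto simp: zero_less_iff_neq_zero)
    also have "\<dots> \<le> bmo_pow (\<alpha>*p2) M (HH e)" by (rule bmo_ge[OF sM B])
    finally show "ennreal (real n) < bmo_pow (\<alpha>*p2) M (HH e)" .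
    qed
  qed
qed

lemma exists_bad: "\<exists>\<epsilon>. bmo_pow (\<alpha>*p2) M (HH \<epsilon>) = \<infinity>"
proof -
  define Pr where "Pr \<epsilon> k n \<epsilon>' k' \<longleftrightarrow> k < k' \<and> (\<forall>i<k. \<epsilon>' i = \<epsilon> i) \<and>
     (\<forall>\<epsilon>''. (\<forall>i<k'. \<epsilon>'' i = \<epsilon>' i) \<longrightarrow> ennreal (real n) < bmo_pow (\<alpha>*p2) M (HH \<epsilon>''))"
    for \<epsilon> k n \<epsilon>' k'
  have ex: "\<exists>\<epsilon>' k'. Pr \<epsilon> k n \<epsilon>' k'" for \<epsilon> k n unfolding Pr_def by (rule step)
  define E where "E \<epsilon> k n = (SOME \<epsilon>'. \<exists>k'. Pr \<epsilon> k n \<epsilon>' k')" for \<epsilon> k n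
  define K where "K \<epsilon> k n = (SOME k'. Pr \<epsilon> k n (E \<epsilon> k n) k')" for \<epsilon> k n
  have "Pr \<epsilon> k n (E \<epsilon> k n) (K \<epsilon> k n)" for \<epsilon> k n
  proof -
    have "\<exists>k'. Pr \<epsilon> k n (E \<epsilon> k n) k'" unfolding E_def by (rule someI_ex[OF ex])
    then show ?thesis unfolding K_def by (rule someI_ex)
  qed
  then have EK: "\<And>\<epsilon> k n. k < K \<epsilon> k n \<and> (\<forall>i<k. E \<epsilon> k n i = \<epsilon> i) \<and>
     (\<forall>\<epsilon>''. (\<forall>i<K \<epsilon> k n. \<epsilon>'' i = E \<epsilon> k n i) \<longrightarrow> ennreal (real n) < bmo_pow (\<alpha>*p2) M (HH \<epsilon>''))"
    unfolding Pr_def by blast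
  define S where "S = rec_nat ((\<lambda>_. False), 0) (\<lambda>n p. (E (fst p) (snd p) n, K (fst p) (snd p) n))"
  define e where "e n = fst (S n)" for n
  define \<kappa> where "\<kappa> n = snd (S n)" for n
  have S0: "S 0 = ((\<lambda>_. False), 0)" unfolding S_def by simp
  have SS: "S (Suc n) = (E (e n) (\<kappa> n) n, K (e n) (\<kappa> n) n)" for n unfolding S_def e_def \<kappa>_def by simp
  have eS: "e (Suc n) = E (e n) (\<kappa> n) n" and kS: "\<kappa> (Suc n) = K (e n) (\<kappa> n) n" for n
    unfolding e_def \<kappa>_def using SS[of n, unfolded e_def \<kappa>_def] by (metis fst_conv snd_conv)+
  have kinc: "\<kappa> n < \<kappa> (Suc n)" for n using EK[of "\<kappa> n" "e n" n] kS[of n] by simp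
  have eagr: "\<forall>i<\<kappa> n. e (Suc n) i = e n i" for n using EK[of "\<kappa> n" "e n" n] eS[of n] by simp
  have big: "\<forall>\<epsilon>''. (\<forall>i<\<kappa> (Suc n). \<epsilon>'' i = e (Suc n) i) \<longrightarrow> ennreal (real n) < bmo_pow (\<alpha>*p2) M (HH \<epsilon>'')" for n
    using EK[of "\<kappa> n" "e n" n] eS[of n] kS[of n] by simp
  have kmono: "n \<le> m \<Longrightarrow> \<kappa> n \<le> \<kappa> m" for n m
    using kinc lift_Suc_mono_le[of \<kappa> n m] by (simp add: less_imp_le)
  have kge: "n \<le> \<kappa> n" for n
  proof (induction n)
    case (Suc n) then show ?case using kinc[of n] by simp
  qed simp
  have agr: "n \<le> m \<Longrightarrow> \<forall>i<\<kappa> n. e m i = e n i" for n m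
  proof (induction m rule: dec_induct)
    case (step m)
    then show ?case using eagr[of m] kmono[of n m] by auto
  qed simp
  define es where "es i = e (Suc i) i" for i
  have esagr: "\<forall>i<\<kappa> (Suc n). es i = e (Suc n) i" for n
  proof (intro allI impI)
    fix i assume i: "i < \<kappa> (Suc n)"
    show "es i = e (Suc n) i"
    proof (cases "n \<le> i")
      case True
      then show ?thesis using agr[of "Suc n" "Suc i"] i unfolding es_def by auto
    next
      case False
      then have "Suc i \<le> Suc n" by simp
      moreover have "i < \<kappa> (Suc i)" using kge[of "Suc i"] by simp
      ultimately show ?thesis using agr[of "Suc i" "Suc n"] unfolding es_def by auto
    qed
  qed
  have lt: "ennreal (real n) < bmo_pow (\<alpha>*p2) M (HH es)" for n using big esagr by blast
  have "bmo_pow (\<alpha>*p2) M (HH es) = \<infinity>"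
  proof (rule ccontr)
    assume "bmo_pow (\<alpha>*p2) M (HH es) \<noteq> \<infinity>"
    then obtain r where r: "bmo_pow (\<alpha>*p2) M (HH es) = ennreal r" "0 \<le> r"
      by (cases "bmo_pow (\<alpha>*p2) M (HH es)") auto
    have "ennreal (real (nat \<lceil>r\<rceil>)) < ennreal r" using lt[of "nat \<lceil>r\<rceil>"] r by simp
    then have "real (nat \<lceil>r\<rceil>) < r" by (subst (asm) ennreal_less_iff) auto
    then show False by linarith
  qed
  then show ?thesis by blast
qed

end

theorem lemma5p2p1:
  fixes M :: "'a::metric_space measure" and p1 p2 :: real
  assumes "sets M = sets borel"
    and "1 \<le> p1" and "p1 < p2"
    and "BMO M p2 \<subset> BMO M p1"
  shows "\<forall>\<alpha>::real. 1 < \<alpha> \<longrightarrow> BMO M (\<alpha> * p2) \<subset> BMO M (\<alpha> * p1)"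
proof (intro allI impI)
  fix \<alpha> :: real assume al: "1 < \<alpha>"
  note sM = assms(1) and p1 = assms(2) and p12 = assms(3)
  obtain f where fB: "f \<in> BMO M p1" and fn: "f \<notin> BMO M p2" using assms(4) by blast
  have ftop: "bmo_pow p2 M f = \<infinity>" using fB fn unfolding BMO_def by (simp add: not_less top_unique)
  have sub: "BMO M (\<alpha> * p2) \<subseteq> BMO M (\<alpha> * p1)"
  proof -
    have a: "0 < \<alpha> * p1" using al p1 by simp
    have b: "\<alpha> * p1 < \<alpha> * p2" using al p12 by simp
    show ?thesis using BMO_mono[OF sM a b] by blast
  qed
  have "\<forall>j. \<exists>B. B \<in> admissible_balls M \<and>
      ennreal (Acon (\<alpha>*p2) (N1 M f p1) j) * emeasure M B < Iq M p2 f B"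
  proof
    fix j
    have "ennreal (Acon (\<alpha>*p2) (N1 M f p1) j) < bmo_pow p2 M f" using ftop by simp
    then have "ennreal (Acon (\<alpha>*p2) (N1 M f p1) j) < (SUP B\<in>admissible_balls M. Iq M p2 f B / emeasure M B)"
      unfolding bmo_pow_def Iq_def .
    then obtain B where B: "B \<in> admissible_balls M"
      and lt: "ennreal (Acon (\<alpha>*p2) (N1 M f p1) j) < Iq M p2 f B / emeasure M B"
      unfolding less_SUP_iff by blast
    have "ennreal (Acon (\<alpha>*p2) (N1 M f p1) j) * emeasure M B < Iq M p2 f B"
    proof (rule ccontr)
      assume "\<not> ?thesis"
      then have "Iq M p2 f B \<le> emeasure M B * ennreal (Acon (\<alpha>*p2) (N1 M f p1) j)"
        by (simp add: not_less mult.commute)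
      then have "Iq M p2 f B / emeasure M B \<le> ennreal (Acon (\<alpha>*p2) (N1 M f p1) j)"
        using adm(5)[OF sM B] by (intro divide_le_posI_ennreal) (auto simp: zero_less_iff_neq_zero)
      then show False using lt by simp
    qed
    then show "\<exists>B. B \<in> admissible_balls M \<and> ennreal (Acon (\<alpha>*p2) (N1 M f p1) j) * emeasure M B < Iq M p2 f B"
      using B by blast
  qed
  then obtain Bs where BB: "\<forall>j. Bs j \<in> admissible_balls M \<and>
      ennreal (Acon (\<alpha>*p2) (N1 M f p1) j) * emeasure M (Bs j) < Iq M p2 f (Bs j)"
    using choice[of "\<lambda>j B. B \<in> admissible_balls M \<and> ennreal (Acon (\<alpha>*p2) (N1 M f p1) j) * emeasure M B < Iq M p2 f B"] by blast
  have Badm: "\<And>j. Bs j \<in> admissible_balls M" using BB by blast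
  have Bbig: "\<And>j. ennreal (Acon (\<alpha>*p2) (N1 M f p1) j) * emeasure M (Bs j) < Iq M p2 f (Bs j)" using BB by blast
  obtain \<epsilon> where bad: "bmo_pow (\<alpha>*p2) M (\<lambda>x. PhiF (1/\<alpha>) (\<lambda>j. ball_avg M f (Bs j)) \<epsilon> (f x)) = \<infinity>"
    using exists_bad[OF sM fB p1 al p12 Badm Bbig] by blast
  have inB1: "(\<lambda>x. PhiF (1/\<alpha>) (\<lambda>j. ball_avg M f (Bs j)) \<epsilon> (f x)) \<in> BMO M (\<alpha> * p1)"
    by (rule hh_BMO[OF sM fB p1 al])
  have notB2: "(\<lambda>x. PhiF (1/\<alpha>) (\<lambda>j. ball_avg M f (Bs j)) \<epsilon> (f x)) \<notin> BMO M (\<alpha> * p2)"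
    using bad unfolding BMO_def by simp
  show "BMO M (\<alpha> * p2) \<subset> BMO M (\<alpha> * p1)" using sub inB1 notB2 by blast
qed

end
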